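(* For every infinite $\lambda$-term $M$: $\lambda.M$ is derivable in $\mathbf{Reg}^{+}$ if and only if $\lambda.M$ is derivable in $\mathbf{Reg}^{+}_0$.
   Context: Infinite $\lambda$-terms are possibly infinite terms built from variables, abstractions and applications, modulo $\alpha$-equivalence. A prefixed term is $\lambda x_1\ldots x_n.M$ ($n\ge0$, distinct variables, separate abstraction prefix; $\lambda.M$ for empty prefix) with the free variables of $M$ among the $x_i$. Proof system $\mathbf{Reg}^{+}$ (finite natural-deduction trees of prefixed terms): axiom (nlvar) $\lambda\vec{x}y.y$; $(\lambda)$: from $\lambda\vec{x}y.M_0$ infer $\lambda\vec{x}.\lambda y.M_0$; $(@)$: from $\lambda\vec{x}.M_0$ and $\lambda\vec{x}.M_1$ infer $\lambda\vec{x}.(M_0\,M_1)$; $(\mathrm{del}^{+})$: from $\lambda x_1\ldots x_{n-1}.M$ infer $\lambda x_1\ldots x_n.M$ if $x_n$ is not free in $M$; (FIX,$u$): if $\mathcal{D}_0$ is a derivation of depth $\ge1$ of $\lambda\vec{x}.M$ possibly with open assumption leaves $[\lambda\vec{x}.M]^u$, infer $\lambda\vec{x}.M$, discharging them. $\mathbf{Reg}^{+}_0$: same axioms and rules, but each instance of (FIX,$u$) must additionally satisfy: every $\lambda\vec{y}.N$ on a thread in $\mathcal{D}_0$ from an open marked assumption $(\lambda\vec{x}.M)^u$ downwards has $|\vec{y}|\ge|\vec{x}|$. A prefixed term is derivable in a system if there is a finite derivation of it in which every marked assumption is discharged by some instance of (FIX). *)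

theory Defs
  imports Main
begin

text \<open>Infinite lambda-terms modulo alpha-equivalence, represented by (possibly
infinite) de Bruijn terms. Index 0 refers to the innermost enclosing binder.\<close>
codatatype iterm = Var nat | Abs iterm | App iterm iterm

coinductive closed_in :: "nat \<Rightarrow> iterm \<Rightarrow> bool" where
  "i < n \<Longrightarrow> closed_in n (Var i)"
| "closed_in (Suc n) M \<Longrightarrow> closed_in n (Abs M)"
| "closed_in n M0 \<Longrightarrow> closed_in n M1 \<Longrightarrow> closed_in n (App M0 M1)"

primcorec shift :: "nat \<Rightarrow> iterm \<Rightarrow> iterm" where
  "shift k t = (case t of
      Var i \<Rightarrow> Var (if i < k then i else Suc i)
    | Abs s \<Rightarrow> Abs (shift (Suc k) s)
    | App a b \<Rightarrow> App (shift k a) (shift k b))"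

text \<open>A prefixed term \<lambda>x1...xn.M is represented as (n, M), the variable x_i
being de Bruijn index n - i inside M.\<close>
type_synonym pterm = "nat \<times> iterm"

datatype drv =
    Nlvar nat
  | Hyp nat pterm
  | LamI drv
  | AppI drv drv
  | DelI drv
  | FixI nat drv

fun concl :: "drv \<Rightarrow> pterm" where
  "concl (Nlvar n) = (Suc n, Var 0)"
| "concl (Hyp u A) = A"
| "concl (LamI d) = (fst (concl d) - 1, Abs (snd (concl d)))"
| "concl (AppI d e) = (fst (concl d), App (snd (concl d)) (snd (concl e)))"
| "concl (DelI d) = (Suc (fst (concl d)), shift 0 (snd (concl d)))"
| "concl (FixI u d) = concl d"

fun open_hyps :: "drv \<Rightarrow> (nat \<times> pterm) set" where
  "open_hyps (Nlvar n) = {}"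
| "open_hyps (Hyp u A) = {(u, A)}"
| "open_hyps (LamI d) = open_hyps d"
| "open_hyps (AppI d e) = open_hyps d \<union> open_hyps e"
| "open_hyps (DelI d) = open_hyps d"
| "open_hyps (FixI u d) = {h \<in> open_hyps d. fst h \<noteq> u}"

fun is_leaf :: "drv \<Rightarrow> bool" where
  "is_leaf (Nlvar n) = True"
| "is_leaf (Hyp u A) = True"
| "is_leaf _ = False"

text \<open>Thread condition of Reg+_0: every formula on a thread from an open
assumption marked u down to the root has prefix length at least k.\<close>
fun threads_ok :: "nat \<Rightarrow> nat \<Rightarrow> drv \<Rightarrow> bool" where
  "threads_ok u k (Nlvar n) = True"
| "threads_ok u k (Hyp v A) = (v = u \<longrightarrow> k \<le> fst A)"
| "threads_ok u k (LamI d) =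
     (((\<exists>A. (u, A) \<in> open_hyps (LamI d)) \<longrightarrow> k \<le> fst (concl (LamI d))) \<and> threads_ok u k d)"
| "threads_ok u k (AppI d e) =
     (((\<exists>A. (u, A) \<in> open_hyps (AppI d e)) \<longrightarrow> k \<le> fst (concl (AppI d e)))
       \<and> threads_ok u k d \<and> threads_ok u k e)"
| "threads_ok u k (DelI d) =
     (((\<exists>A. (u, A) \<in> open_hyps (DelI d)) \<longrightarrow> k \<le> fst (concl (DelI d))) \<and> threads_ok u k d)"
| "threads_ok u k (FixI v d) =
     (((\<exists>A. (u, A) \<in> open_hyps (FixI v d)) \<longrightarrow> k \<le> fst (concl (FixI v d)))
       \<and> (v \<noteq> u \<longrightarrow> threads_ok u k d))"

text \<open>Correctness of a derivation; the flag r0 selects Reg+_0 (True) or Reg+ (False).\<close>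
fun valid :: "bool \<Rightarrow> drv \<Rightarrow> bool" where
  "valid r0 (Nlvar n) = True"
| "valid r0 (Hyp u A) = closed_in (fst A) (snd A)"
| "valid r0 (LamI d) = (valid r0 d \<and> 0 < fst (concl d))"
| "valid r0 (AppI d e) = (valid r0 d \<and> valid r0 e \<and> fst (concl d) = fst (concl e))"
| "valid r0 (DelI d) = valid r0 d"
| "valid r0 (FixI u d) =
     (valid r0 d \<and> \<not> is_leaf d
      \<and> (\<forall>A. (u, A) \<in> open_hyps d \<longrightarrow> A = concl d)
      \<and> (r0 \<longrightarrow> threads_ok u (fst (concl d)) d))"

definition derivable_Reg_plus :: "pterm \<Rightarrow> bool" where
  "derivable_Reg_plus A = (\<exists>d. valid False d \<and> open_hyps d = {} \<and> concl d = A)"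

definition derivable_Reg_plus0 :: "pterm \<Rightarrow> bool" where
  "derivable_Reg_plus0 A = (\<exists>d. valid True d \<and> open_hyps d = {} \<and> concl d = A)"

end

theory Submission
  imports Defs
begin

lemma closed_shift:
  assumes "closed_in n N" "k \<le> n"
  shows "closed_in (Suc n) (shift k N)"
proof -
  have "\<exists>n k N. m = Suc n \<and> T = shift k N \<and> k \<le> n \<and> closed_in n N \<Longrightarrow> closed_in m T" for m T
  proof (coinduction arbitrary: m T rule: closed_in.coinduct)
    case (closed_in m T)
    then obtain n k N where h: "m = Suc n" "T = shift k N" "k \<le> n" "closed_in n N" by blast
    from h(4) show ?case
    proof (cases rule: closed_in.cases)
      case (1 i) then show ?thesis using h by (auto simp: shift.ctr)
    next
      case (2 M) then show ?thesis using h by (auto simp: shift.ctr)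
    next
      case (3 M0 M1) then show ?thesis using h by (auto simp: shift.ctr)
    qed
  qed
  then show ?thesis using assms by blast
qed

lemma valid_closed: "valid r d \<Longrightarrow> closed_in (fst (concl d)) (snd (concl d))"
proof (induction d)
  case (Nlvar n) then show ?case by (auto intro: closed_in.intros)
next
  case (Hyp u A) then show ?case by auto
next
  case (LamI d) then show ?case
    by (auto intro!: closed_in.intros(2) simp: Suc_pred)
next
  case (AppI d e) then show ?case by (auto intro: closed_in.intros)
next
  case (DelI d) then show ?case by (auto intro: closed_shift)
next
  case (FixI u d) then show ?case by auto
qed

lemma valid_True_False: "valid True d \<Longrightarrow> valid False d"
  by (induction d) auto

fun subc :: "drv \<Rightarrow> pterm set" where
  "subc (Nlvar n) = {concl (Nlvar n)}"
| "subc (Hyp u A) = {A}"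
| "subc (LamI d) = insert (concl (LamI d)) (subc d)"
| "subc (AppI d e) = insert (concl (AppI d e)) (subc d \<union> subc e)"
| "subc (DelI d) = insert (concl (DelI d)) (subc d)"
| "subc (FixI u d) = insert (concl (FixI u d)) (subc d)"

lemma finite_subc: "finite (subc d)"
  by (induction d) auto

lemma concl_subc: "concl d \<in> subc d"
  by (cases d) auto

definition good :: "pterm set \<Rightarrow> pterm \<Rightarrow> bool" where
  "good S J \<longleftrightarrow> (\<exists>n. J = (Suc n, Var 0))
     \<or> (\<exists>n N. J = (n, Abs N) \<and> (Suc n, N) \<in> S)
     \<or> (\<exists>n A B. J = (n, App A B) \<and> (n, A) \<in> S \<and> (n, B) \<in> S)
     \<or> (\<exists>n N. J = (Suc n, shift 0 N) \<and> (n, N) \<in> S)"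

lemma good_mono: "good S J \<Longrightarrow> S \<subseteq> T \<Longrightarrow> good T J"
  unfolding good_def by blast

lemma lemA: "valid r d \<Longrightarrow> \<not> is_leaf d \<or> (\<exists>n. d = Nlvar n) \<Longrightarrow> good (subc d) (concl d)"
proof (induction d)
  case (Nlvar n) then show ?case by (auto simp: good_def)
next
  case (Hyp u A) then show ?case by auto
next
  case (LamI d)
  then have "0 < fst (concl d)" by auto
  then obtain n where n: "fst (concl d) = Suc n" by (cases "fst (concl d)") auto
  have c: "concl (LamI d) = (n, Abs (snd (concl d)))" using n by simp
  have m: "(Suc n, snd (concl d)) \<in> subc (LamI d)" using concl_subc[of d] n
    by (metis insertCI prod.collapse subc.simps(3))
  show ?case unfolding good_def c using m by blast
next
  case (AppI d e)
  have c: "concl (AppI d e) = (fst (concl d), App (snd (concl d)) (snd (concl e)))" by simp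
  have m: "(fst (concl d), snd (concl d)) \<in> subc (AppI d e)" "(fst (concl d), snd (concl e)) \<in> subc (AppI d e)"
  proof -
    have eq: "fst (concl d) = fst (concl e)" using AppI.prems by auto
    show "(fst (concl d), snd (concl d)) \<in> subc (AppI d e)"
      using concl_subc[of d] by (metis UnCI insertCI prod.collapse subc.simps(4))
    show "(fst (concl d), snd (concl e)) \<in> subc (AppI d e)"
      using concl_subc[of e] eq by (metis UnCI insertCI prod.collapse subc.simps(4))
  qed
  show ?case unfolding good_def c using m by blast
next
  case (DelI d)
  have c: "concl (DelI d) = (Suc (fst (concl d)), shift 0 (snd (concl d)))" by simp
  have m: "(fst (concl d), snd (concl d)) \<in> subc (DelI d)" using concl_subc[of d]
    by (metis insertCI prod.collapse subc.simps(5))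
  show ?case unfolding good_def c using m by blast
next
  case (FixI u d)
  then have "good (subc d) (concl d)" by (cases d) auto
  then show ?case by (auto intro: good_mono)
qed

lemma lemB: "valid False d \<Longrightarrow> subc d \<subseteq> S \<Longrightarrow> (\<forall>u A. (u, A) \<in> open_hyps d \<longrightarrow> good S A)
   \<Longrightarrow> \<forall>J\<in>subc d. good S J"
proof (induction d)
  case (Nlvar n) then show ?case using good_mono[OF lemA[of False "Nlvar n"]] by simp
next
  case (Hyp u A) then show ?case by auto
next
  case (LamI d)
  have g: "good S (concl (LamI d))"
    by (rule good_mono[OF lemA[of False "LamI d"] LamI.prems(2)]) (use LamI.prems(1) in simp_all)
  have "\<forall>J\<in>subc d. good S J"
    by (rule LamI.IH) (use LamI.prems in auto)
  then show ?case using g by simp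
next
  case (AppI d e)
  have g: "good S (concl (AppI d e))"
    by (rule good_mono[OF lemA[of False "AppI d e"] AppI.prems(2)]) (use AppI.prems(1) in simp_all)
  have h1: "\<forall>J\<in>subc d. good S J"
    by (rule AppI.IH(1)) (use AppI.prems in auto)
  have h2: "\<forall>J\<in>subc e. good S J"
    by (rule AppI.IH(2)) (use AppI.prems in auto)
  show ?case using g h1 h2 by (simp only: subc.simps ball_simps Un_iff) blast
next
  case (DelI d)
  have g: "good S (concl (DelI d))"
    by (rule good_mono[OF lemA[of False "DelI d"] DelI.prems(2)]) (use DelI.prems(1) in simp_all)
  have "\<forall>J\<in>subc d. good S J"
    by (rule DelI.IH) (use DelI.prems in auto)
  then show ?case using g by simp
next
  case (FixI u d)
  have g: "good S (concl d)" using lemA[of False d] FixI.prems concl_subc[of d]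
    by (cases d) (auto intro: good_mono)
  have "\<forall>v A. (v, A) \<in> open_hyps d \<longrightarrow> good S A"
  proof (intro allI impI)
    fix v A assume "(v, A) \<in> open_hyps d"
    note vA = this
    show "good S A"
    proof (cases "v = u")
      case True
      have "\<forall>A. (u, A) \<in> open_hyps d \<longrightarrow> A = concl d" using FixI.prems(1) unfolding valid.simps by (elim conjE)
      then have "A = concl d" using vA True by blast
      then show ?thesis using g by simp
    next
      case False
      then have "(v, A) \<in> open_hyps (FixI u d)" using vA by simp
      then show ?thesis using FixI.prems(3) by blast
    qed
  qed
  then have h: "\<forall>J\<in>subc d. good S J"
    using FixI.IH FixI.prems(1,2) by simp
  show ?case using h g by simp
qed

lemma threads_noopen: "(\<forall>A. (u, A) \<notin> open_hyps d) \<Longrightarrow> threads_ok u k d"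
  by (induction d) auto

definition wt :: "pterm set \<Rightarrow> nat \<Rightarrow> nat" where
  "wt S p = (card S + 1) ^ (Max (fst ` S) - p)"

definition mu :: "pterm set \<Rightarrow> pterm set \<Rightarrow> nat" where
  "mu S H = (\<Sum>h\<in>S - H. wt S (fst h))"

lemma tail_lt:
  assumes "finite S" "P \<in> S"
  shows "(\<Sum>h\<in>{h\<in>S. fst P < fst h}. wt S (fst h)) < wt S (fst P)"
proof -
  let ?B = "Max (fst ` S)" and ?N = "card S"
  have le: "fst h \<le> ?B" if "h \<in> S" for h using assms that by auto
  show ?thesis
  proof (cases "fst P < ?B")
    case False
    then have e: "{h\<in>S. fst P < fst h} = {}" using le by force
    show ?thesis unfolding e wt_def by simp
  next
    case True
    have "(\<Sum>h\<in>{h\<in>S. fst P < fst h}. wt S (fst h)) \<le> (\<Sum>h\<in>{h\<in>S. fst P < fst h}. (?N+1) ^ (?B - fst P - 1))"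
      unfolding wt_def by (rule sum_mono) (auto intro!: power_increasing dest: le)
    also have "\<dots> = card {h\<in>S. fst P < fst h} * (?N+1) ^ (?B - fst P - 1)" by simp
    also have "\<dots> \<le> ?N * (?N+1) ^ (?B - fst P - 1)"
      using assms by (intro mult_right_mono card_mono) auto
    also have "\<dots> < (?N+1) * (?N+1) ^ (?B - fst P - 1)" by simp
    also have "\<dots> = wt S (fst P)" unfolding wt_def using True
      by (metis Suc_diff_Suc diff_Suc_1 power_Suc zero_less_diff)
    finally show ?thesis .
  qed
qed

lemma mu_dec:
  assumes "finite S" "P \<in> S" "P \<notin> H"
  shows "mu S ({h\<in>H. fst h \<le> fst P} \<union> {P}) < mu S H"
proof -
  let ?T = "{h\<in>S. fst P < fst h}"
  have sub: "S - ({h\<in>H. fst h \<le> fst P} \<union> {P}) \<subseteq> (S - H - {P}) \<union> ?T" by auto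
  have "mu S ({h\<in>H. fst h \<le> fst P} \<union> {P}) \<le> (\<Sum>h\<in>(S - H - {P}) \<union> ?T. wt S (fst h))"
    unfolding mu_def using assms by (intro sum_mono2 sub) auto
  also have "\<dots> \<le> (\<Sum>h\<in>S - H - {P}. wt S (fst h)) + (\<Sum>h\<in>?T. wt S (fst h))"
    using assms by (simp add: sum_Un_nat)
  also have "\<dots> < (\<Sum>h\<in>S - H - {P}. wt S (fst h)) + wt S (fst P)"
    using tail_lt[OF assms(1,2)] by simp
  also have "\<dots> = mu S H" unfolding mu_def using assms
    by (simp add: sum.remove[of "S - H" P] add.commute)
  finally show ?thesis .
qed



lemma main:
  assumes fin: "finite S" and gd: "\<forall>J\<in>S. good S J"
    and cl: "\<forall>J\<in>S. closed_in (fst J) (snd J)" and inj: "inj_on lab S"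
  shows "H \<subseteq> S \<Longrightarrow> J \<in> H \<Longrightarrow> \<forall>h\<in>H. fst h \<le> fst J \<Longrightarrow>
    \<exists>d. valid True d \<and> concl d = J \<and> open_hyps d \<subseteq> (\<lambda>h. (lab h, h)) ` (H - {J})
       \<and> (\<forall>h\<in>H. threads_ok (lab h) (fst h) d)"
proof (induction "mu S H" arbitrary: H J rule: less_induct)
  case (less H J)
  note HS = less.prems(1) and JH = less.prems(2) and Hle = less.prems(3)
  have prem: "\<exists>e. valid True e \<and> concl e = P \<and> open_hyps e \<subseteq> (\<lambda>h. (lab h, h)) ` {h\<in>H. fst h \<le> fst P}
       \<and> (\<forall>h\<in>H. threads_ok (lab h) (fst h) e)" if PS: "P \<in> S" for P
  proof (cases "P \<in> {h\<in>H. fst h \<le> fst P}")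
    case True
    show ?thesis
    proof (intro exI conjI)
      show "valid True (Hyp (lab P) P)" using cl PS by simp
      show "\<forall>h\<in>H. threads_ok (lab h) (fst h) (Hyp (lab P) P)"
        using inj PS HS True by (auto dest: inj_onD)
    qed (use True in auto)
  next
    case False
    let ?G = "{h\<in>H. fst h \<le> fst P} \<union> {P}"
    have PH: "P \<notin> H" using False Hle by auto
    have lt: "mu S ?G < mu S H" using mu_dec[OF fin PS PH] .
    obtain e where e: "valid True e" "concl e = P" "open_hyps e \<subseteq> (\<lambda>h. (lab h, h)) ` (?G - {P})"
      "\<forall>h\<in>?G. threads_ok (lab h) (fst h) e"
    proof -
      have a1: "?G \<subseteq> S" using HS PS by auto
      have a2: "P \<in> ?G" by simp
      have a3: "\<forall>h\<in>?G. fst h \<le> fst P" by simp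
      from less.hyps[OF lt a1 a2 a3] show ?thesis using that by blast
    qed
    have op: "open_hyps e \<subseteq> (\<lambda>h. (lab h, h)) ` {h\<in>H. fst h \<le> fst P}" using e(3) by auto
    have "threads_ok (lab h) (fst h) e" if hH: "h \<in> H" for h
    proof (cases "h \<in> ?G")
      case True then show ?thesis using e(4) by blast
    next
      case False
      have "\<forall>A. (lab h, A) \<notin> open_hyps e"
      proof (intro allI notI)
        fix A assume "(lab h, A) \<in> open_hyps e"
        with op obtain g where g: "g \<in> H" "fst g \<le> fst P" "lab h = lab g" by auto
        then have "h = g" using inj HS hH by (auto dest: inj_onD)
        then show False using False g by auto
      qed
      then show ?thesis by (rule threads_noopen)
    qed
    then show ?thesis using e op by blast
  qed
  have JS: "J \<in> S" using HS JH by auto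
  have labJ: "\<And>h. h \<in> H \<Longrightarrow> lab h = lab J \<Longrightarrow> h = J" using inj HS JS by (auto dest: inj_onD)
  have fixit: "\<exists>d. valid True d \<and> concl d = J \<and> open_hyps d \<subseteq> (\<lambda>h. (lab h, h)) ` (H - {J})
       \<and> (\<forall>h\<in>H. threads_ok (lab h) (fst h) d)"
    if r: "valid True r" "\<not> is_leaf r" "concl r = J" "open_hyps r \<subseteq> (\<lambda>h. (lab h, h)) ` H"
       "\<forall>h\<in>H. threads_ok (lab h) (fst h) r" for r
  proof (intro exI conjI)
    show "valid True (FixI (lab J) r)" using r labJ JH by auto
    show "concl (FixI (lab J) r) = J" using r by simp
    show "open_hyps (FixI (lab J) r) \<subseteq> (\<lambda>h. (lab h, h)) ` (H - {J})"
    proof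
      fix x assume x: "x \<in> open_hyps (FixI (lab J) r)"
      then have x1: "x \<in> open_hyps r" "fst x \<noteq> lab J" by auto
      then obtain h where h: "h \<in> H" "x = (lab h, h)" using r(4) by blast
      then have "h \<noteq> J" using x1 by auto
      then show "x \<in> (\<lambda>h. (lab h, h)) ` (H - {J})" using h by blast
    qed
    show "\<forall>h\<in>H. threads_ok (lab h) (fst h) (FixI (lab J) r)"
      using r Hle by auto
  qed
  from gd JS have "good S J" by auto
  then show ?case unfolding good_def
  proof (elim disjE exE conjE)
    fix n assume "J = (Suc n, Var 0)"
    then show ?thesis by (intro exI[of _ "Nlvar n"]) auto
  next
    fix n N assume J: "J = (n, Abs N)" and P: "(Suc n, N) \<in> S"
    obtain e where e: "valid True e" "concl e = (Suc n, N)"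
      "open_hyps e \<subseteq> (\<lambda>h. (lab h, h)) ` {h\<in>H. fst h \<le> fst (Suc n, N)}"
      "\<forall>h\<in>H. threads_ok (lab h) (fst h) e" using prem[OF P] by blast
    show ?thesis
    proof (rule fixit[of "LamI e"])
      show "open_hyps (LamI e) \<subseteq> (\<lambda>h. (lab h, h)) ` H" using e(3) by auto
      show "\<forall>h\<in>H. threads_ok (lab h) (fst h) (LamI e)" using e Hle J by auto
    qed (use e J in auto)
  next
    fix n A B assume J: "J = (n, App A B)" and P: "(n, A) \<in> S" "(n, B) \<in> S"
    obtain e where e: "valid True e" "concl e = (n, A)"
      "open_hyps e \<subseteq> (\<lambda>h. (lab h, h)) ` {h\<in>H. fst h \<le> fst (n, A)}"
      "\<forall>h\<in>H. threads_ok (lab h) (fst h) e" using prem[OF P(1)] by blast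
    obtain f where f: "valid True f" "concl f = (n, B)"
      "open_hyps f \<subseteq> (\<lambda>h. (lab h, h)) ` {h\<in>H. fst h \<le> fst (n, B)}"
      "\<forall>h\<in>H. threads_ok (lab h) (fst h) f" using prem[OF P(2)] by blast
    show ?thesis
    proof (rule fixit[of "AppI e f"])
      show "open_hyps (AppI e f) \<subseteq> (\<lambda>h. (lab h, h)) ` H" using e(3) f(3) by auto
      show "\<forall>h\<in>H. threads_ok (lab h) (fst h) (AppI e f)" using e f Hle J by auto
    qed (use e f J in auto)
  next
    fix n N assume J: "J = (Suc n, shift 0 N)" and P: "(n, N) \<in> S"
    obtain e where e: "valid True e" "concl e = (n, N)"
      "open_hyps e \<subseteq> (\<lambda>h. (lab h, h)) ` {h\<in>H. fst h \<le> fst (n, N)}"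
      "\<forall>h\<in>H. threads_ok (lab h) (fst h) e" using prem[OF P] by blast
    show ?thesis
    proof (rule fixit[of "DelI e"])
      show "open_hyps (DelI e) \<subseteq> (\<lambda>h. (lab h, h)) ` H" using e(3) by auto
      show "\<forall>h\<in>H. threads_ok (lab h) (fst h) (DelI e)" using e Hle J by auto
    qed (use e J in auto)
  qed
qed

lemma subc_closed: "valid r d \<Longrightarrow> \<forall>J\<in>subc d. closed_in (fst J) (snd J)"
proof (induction d)
  case (Nlvar n)
  show ?case using valid_closed[OF Nlvar.prems] by (simp only: subc.simps) blast
next
  case (Hyp u A)
  then show ?case by simp
next
  case (LamI d)
  have c: "closed_in (fst (concl (LamI d))) (snd (concl (LamI d)))" by (rule valid_closed[OF LamI.prems])
  have i: "\<forall>J\<in>subc d. closed_in (fst J) (snd J)" by (rule LamI.IH) (use LamI.prems in simp)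
  show ?case using c i by (simp only: subc.simps) blast
next
  case (AppI d e)
  have c: "closed_in (fst (concl (AppI d e))) (snd (concl (AppI d e)))" by (rule valid_closed[OF AppI.prems])
  have i: "\<forall>J\<in>subc d. closed_in (fst J) (snd J)" by (rule AppI.IH(1)) (use AppI.prems in simp)
  have i2: "\<forall>J\<in>subc e. closed_in (fst J) (snd J)" by (rule AppI.IH(2)) (use AppI.prems in simp)
  show ?case using c i i2 by (simp only: subc.simps) blast
next
  case (DelI d)
  have c: "closed_in (fst (concl (DelI d))) (snd (concl (DelI d)))" by (rule valid_closed[OF DelI.prems])
  have i: "\<forall>J\<in>subc d. closed_in (fst J) (snd J)" by (rule DelI.IH) (use DelI.prems in simp)
  show ?case using c i by (simp only: subc.simps) blast
next
  case (FixI u d)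
  have c: "closed_in (fst (concl (FixI u d))) (snd (concl (FixI u d)))" by (rule valid_closed[OF FixI.prems])
  have i: "\<forall>J\<in>subc d. closed_in (fst J) (snd J)" by (rule FixI.IH) (use FixI.prems in simp)
  show ?case using c i by (simp only: subc.simps) blast
qed

theorem mainTheorem3:
  fixes M :: iterm
  assumes "closed_in 0 M"
  shows "derivable_Reg_plus (0, M) \<longleftrightarrow> derivable_Reg_plus0 (0, M)"
proof
  assume "derivable_Reg_plus0 (0, M)"
  then show "derivable_Reg_plus (0, M)"
    unfolding derivable_Reg_plus_def derivable_Reg_plus0_def using valid_True_False by blast
next
  assume "derivable_Reg_plus (0, M)"
  then obtain d0 where d0: "valid False d0" "open_hyps d0 = {}" "concl d0 = (0, M)"
    unfolding derivable_Reg_plus_def by blast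
  define S where "S = subc d0"
  have fin: "finite S" unfolding S_def by (rule finite_subc)
  have gd: "\<forall>J\<in>S. good S J" unfolding S_def using lemB[OF d0(1)] d0(2) by auto
  have clall: "\<forall>J\<in>subc d0. closed_in (fst J) (snd J)" using subc_closed[OF d0(1)] .
  have cl: "\<forall>J\<in>S. closed_in (fst J) (snd J)" unfolding S_def using clall by blast
  obtain lab :: "pterm \<Rightarrow> nat" where inj: "inj_on lab S"
    using fin finite_imp_inj_to_nat_seg by blast
  have root: "(0, M) \<in> S" unfolding S_def using concl_subc[of d0] d0(3) by simp
  obtain d where d: "valid True d" "concl d = (0, M)"
    "open_hyps d \<subseteq> (\<lambda>h. (lab h, h)) ` ({(0, M)} - {(0, M)})"
    using main[OF fin gd cl inj, of "{(0, M)}" "(0, M)"] root by auto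
  then show "derivable_Reg_plus0 (0, M)" unfolding derivable_Reg_plus0_def by auto
qed

end
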